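(* Let $p(y,z|x)$ be a discrete memoryless broadcast channel with input alphabet $\mathcal{X}=\{0,1,\dots,m-1\}$. Let $U,V,X$ be random variables with $U,V$ on finite sets $\mathcal{U},\mathcal{V}$ and $X$ on $\mathcal{X}$, and let $(Y,Z)$ be obtained from $X$ through the channel, so that $(U,V)\to X\to(Y,Z)$ is a Markov chain. Define $U^*$ on $\mathcal{U}\times\{0,\dots,m-1\}$, $V^*$ on $\mathcal{V}\times\{0,\dots,m-1\}$, $X^*$ on $\mathcal{X}$ (writing $u_i=(u,i)$, $v_j=(v,j)$) by $P(U^*=u_i,V^*=v_j)=\frac1m P(U=u,V=v,X=(i-j)_m)$ and $X^*=(i-j)_m$ when $(U^*,V^* )=(u_i,v_j)$, where $(l)_m$ is the remainder of $l$ modulo $m$; and let $(Y^*,Z^* )$ be obtained from $X^*$ through the same channel, so $(U^*,V^* )\to X^*\to(Y^*,Z^* )$ is a Markov chain with $p(y^*,z^*|x^* )=p(y,z|x)$. Then: (i) $P(X^*=i)=P(X=i)$ for $0\le i\le m-1$; (ii) $H(Y^*|U^* )=H(Y|U)$; (iii) $H(Z^*|U^* )=H(Z|U)$; (iv) $H(Y^*|V^* )=H(Y|V)$; (v) $H(Z^*|V^* )=H(Z|V)$; (vi) $H(Y^*|U^*,V^* )=H(Y^*|X^* )=H(Y|X)\le H(Y|U,V)$; (vii) $H(Z^*|U^*,V^* )=H(Z^*|X^* )=H(Z|X)\le H(Z|U,V)$. *)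

theory Defs
  imports Complex_Main
begin

text \<open>Finite probability spaces are given by a nonnegative mass function f on a finite
  sample set S. Random variables are functions on the sample points.\<close>

definition marg :: "('w \<Rightarrow> real) \<Rightarrow> 'w set \<Rightarrow> ('w \<Rightarrow> 'b) \<Rightarrow> 'b \<Rightarrow> real" where
  "marg f S A a = (\<Sum>\<omega>\<in>{\<omega>\<in>S. A \<omega> = a}. f \<omega>)"

text \<open>Conditional entropy H(A|B) = - sum p(a,b) log2 (p(a,b)/p(b)), written as an
  expectation over sample points (terms with zero mass vanish).\<close>
definition cond_entropy :: "('w \<Rightarrow> real) \<Rightarrow> 'w set \<Rightarrow> ('w \<Rightarrow> 'a) \<Rightarrow> ('w \<Rightarrow> 'b) \<Rightarrow> real" where
  "cond_entropy f S A B =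
     - (\<Sum>\<omega>\<in>S. f \<omega> * log 2 (marg f S (\<lambda>w. (A w, B w)) (A \<omega>, B \<omega>) / marg f S B (B \<omega>)))"

text \<open>Joint law of (U,V,X,Y,Z) where (U,V,X) has mass Q and (Y,Z) arises from X through
  the channel W, i.e. (U,V) -> X -> (Y,Z) is a Markov chain.\<close>
definition bc_joint :: "('a \<Rightarrow> 'b \<Rightarrow> nat \<Rightarrow> real) \<Rightarrow> (nat \<Rightarrow> 'y \<Rightarrow> 'z \<Rightarrow> real)
    \<Rightarrow> ('a \<times> 'b \<times> nat \<times> 'y \<times> 'z) \<Rightarrow> real" where
  "bc_joint Q W = (\<lambda>(a, b, x, y, z). Q a b x * W x y z)"

definition modm :: "nat \<Rightarrow> nat \<Rightarrow> nat \<Rightarrow> nat" where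
  "modm m i j = nat ((int i - int j) mod int m)"

definition star_dist :: "nat \<Rightarrow> ('u \<Rightarrow> 'v \<Rightarrow> nat \<Rightarrow> real)
    \<Rightarrow> ('u \<times> nat) \<Rightarrow> ('v \<times> nat) \<Rightarrow> nat \<Rightarrow> real" where
  "star_dist m P = (\<lambda>(u, i) (v, j) x. if x = modm m i j then P u v x / real m else 0)"

end

theory Submission
  imports Defs
begin


lemma marg_group:
  assumes "finite S" "finite T" "A ` S \<subseteq> T"
  shows "(\<Sum>\<omega>\<in>S. f \<omega> * h (A \<omega>)) = (\<Sum>a\<in>T. marg f S A a * h a)"
proof -
  have "(\<Sum>\<omega>\<in>S. f \<omega> * h (A \<omega>)) = (\<Sum>a\<in>T. \<Sum>\<omega>\<in>{\<omega>. \<omega>\<in>S \<and> A \<omega> = a}. f \<omega> * h (A \<omega>))"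
    using sum.group[OF assms, of "\<lambda>\<omega>. f \<omega> * h (A \<omega>)"] by simp
  also have "\<dots> = (\<Sum>a\<in>T. marg f S A a * h a)"
    unfolding marg_def by (intro sum.cong refl) (simp add: sum_distrib_right)
  finally show ?thesis .
qed

lemma marg_total:
  assumes "finite S" "finite T" "A ` S \<subseteq> T"
  shows "(\<Sum>a\<in>T. marg f S A a) = (\<Sum>\<omega>\<in>S. f \<omega>)"
  using marg_group[OF assms, of f "\<lambda>_. 1"] by simp

lemma marg_nonneg:
  assumes "\<And>\<omega>. \<omega> \<in> S \<Longrightarrow> f \<omega> \<ge> 0"
  shows "marg f S A a \<ge> 0"
  unfolding marg_def using assms by (intro sum_nonneg) auto

lemma marg_ge:
  assumes "finite S" "\<forall>\<omega>\<in>S. f \<omega> \<ge> 0" "\<omega> \<in> S"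
  shows "f \<omega> \<le> marg f S A (A \<omega>)"
  unfolding marg_def using assms
  by (intro member_le_sum) auto

lemma marg_cong:
  assumes "\<And>\<omega>. \<omega> \<in> S \<Longrightarrow> A \<omega> = B \<omega>"
  shows "marg f S A = marg f S B"
  unfolding marg_def using assms
  by (intro ext sum.cong) auto

lemma ce_T:
  assumes "finite S" "finite T" "(\<lambda>w. (A w, B w)) ` S \<subseteq> T"
  shows "cond_entropy f S A B = - (\<Sum>p\<in>T. marg f S (\<lambda>w. (A w, B w)) p
            * log 2 (marg f S (\<lambda>w. (A w, B w)) p / marg f S B (snd p)))"
  unfolding cond_entropy_def
  using marg_group[OF assms, of f "\<lambda>p. log 2 (marg f S (\<lambda>w. (A w, B w)) p / marg f S B (snd p))"]
  by simp

lemma ce_cong: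
  assumes "\<And>\<omega>. \<omega>\<in>S \<Longrightarrow> f \<omega> \<noteq> 0 \<Longrightarrow>
     marg f S (\<lambda>w. (A w, B w)) (A \<omega>, B \<omega>) / marg f S B (B \<omega>)
   = marg f S (\<lambda>w. (A' w, B' w)) (A' \<omega>, B' \<omega>) / marg f S B' (B' \<omega>)"
  shows "cond_entropy f S A B = cond_entropy f S A' B'"
  unfolding cond_entropy_def
proof (rule arg_cong[where f=uminus], rule sum.cong[OF refl])
  fix \<omega> assume "\<omega> \<in> S"
  then show "f \<omega> * log 2 (marg f S (\<lambda>w. (A w, B w)) (A \<omega>, B \<omega>) / marg f S B (B \<omega>)) =
        f \<omega> * log 2 (marg f S (\<lambda>w. (A' w, B' w)) (A' \<omega>, B' \<omega>) / marg f S B' (B' \<omega>))"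
    using assms by (cases "f \<omega> = 0") auto
qed

lemma ce_le:
  assumes fin: "finite S" and nn: "\<And>\<omega>. \<omega> \<in> S \<Longrightarrow> f \<omega> \<ge> 0"
    and B: "\<And>\<omega>. \<omega> \<in> S \<Longrightarrow> B \<omega> = g (C \<omega>)"
  shows "cond_entropy f S A C \<le> cond_entropy f S A B"
proof -
  have nn': "\<forall>\<omega>\<in>S. f \<omega> \<ge> 0" using nn by blast
  define pAC where "pAC = marg f S (\<lambda>w. (A w, C w))"
  define pC where "pC = marg f S C"
  define pAB where "pAB = marg f S (\<lambda>w. (A w, g (C w)))"
  define pB where "pB = marg f S (\<lambda>w. g (C w))"
  have eB: "marg f S B = pB" unfolding pB_def by (rule marg_cong) (simp add: B)
  have eAB: "marg f S (\<lambda>w. (A w, B w)) = pAB" unfolding pAB_def by (rule marg_cong) (simp add: B)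
  define Q where "Q = (\<lambda>\<omega>. pC (C \<omega>) * pAB (A \<omega>, g (C \<omega>)) / (pAC (A \<omega>, C \<omega>) * pB (g (C \<omega>))))"
  have pos: "pAC (A \<omega>, C \<omega>) > 0" "pC (C \<omega>) > 0" "pAB (A \<omega>, g (C \<omega>)) > 0" "pB (g (C \<omega>)) > 0"
    if "\<omega> \<in> S" "f \<omega> \<noteq> 0" for \<omega>
  proof -
    have f0: "f \<omega> > 0" using nn[OF that(1)] that(2) by simp
    show "pAC (A \<omega>, C \<omega>) > 0" unfolding pAC_def
      using marg_ge[OF fin nn' that(1), where A="\<lambda>w. (A w, C w)"] f0 by simp
    show "pC (C \<omega>) > 0" unfolding pC_def
      using marg_ge[OF fin nn' that(1), where A=C] f0 by simp
    show "pAB (A \<omega>, g (C \<omega>)) > 0" unfolding pAB_def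
      using marg_ge[OF fin nn' that(1), where A="\<lambda>w. (A w, g (C w))"] f0 by simp
    show "pB (g (C \<omega>)) > 0" unfolding pB_def
      using marg_ge[OF fin nn' that(1), where A="\<lambda>w. g (C w)"] f0 by simp
  qed
  have Qsum: "(\<Sum>\<omega>\<in>S. f \<omega> * Q \<omega>) \<le> (\<Sum>\<omega>\<in>S. f \<omega>)"
  proof -
    define k where "k = (\<lambda>p. pC (snd p) * pAB (fst p, g (snd p)) / (pAC p * pB (g (snd p))))"
    define T where "T = (\<lambda>w. (A w, C w)) ` S"
    have finT: "finite T" unfolding T_def using fin by simp
    have nnAB: "\<And>p. pAB p \<ge> 0" unfolding pAB_def by (rule marg_nonneg) (use nn in auto)
    have nnAC: "\<And>p. pAC p \<ge> 0" unfolding pAC_def by (rule marg_nonneg) (use nn in auto)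
    have nnB: "\<And>p. pB p \<ge> 0" unfolding pB_def by (rule marg_nonneg) (use nn in auto)
    have nnC: "\<And>p. pC p \<ge> 0" unfolding pC_def by (rule marg_nonneg) (use nn in auto)
    have "(\<Sum>\<omega>\<in>S. f \<omega> * Q \<omega>) = (\<Sum>\<omega>\<in>S. f \<omega> * k (A \<omega>, C \<omega>))"
      unfolding Q_def k_def by simp
    also have "\<dots> = (\<Sum>p\<in>T. pAC p * k p)"
      unfolding pAC_def T_def by (rule marg_group) (use fin in auto)
    also have "\<dots> \<le> (\<Sum>p\<in>T. pC (snd p) * pAB (fst p, g (snd p)) / pB (g (snd p)))"
    proof (rule sum_mono)
      fix p assume "p \<in> T"
      show "pAC p * k p \<le> pC (snd p) * pAB (fst p, g (snd p)) / pB (g (snd p))"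
      proof (cases "pAC p = 0")
        case True then show ?thesis using nnAB nnB nnC by simp
      next
        case False then show ?thesis unfolding k_def by simp
      qed
    qed
    also have "\<dots> \<le> (\<Sum>p\<in>A ` S \<times> C ` S. pC (snd p) * pAB (fst p, g (snd p)) / pB (g (snd p)))"
      by (rule sum_mono2) (use fin nnAB nnB nnC in \<open>auto simp: T_def\<close>)
    also have "\<dots> = (\<Sum>c\<in>C ` S. pC c / pB (g c) * (\<Sum>a\<in>A ` S. pAB (a, g c)))"
      by (simp add: sum.cartesian_product' sum.swap[of _ "A ` S"] sum_distrib_left)
    also have "\<dots> = (\<Sum>c\<in>C ` S. pC c / pB (g c) * pB (g c))"
    proof (rule sum.cong[OF refl])
      fix c
      let ?Sb = "{\<omega>\<in>S. g (C \<omega>) = g c}"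
      have "(\<Sum>a\<in>A ` S. pAB (a, g c)) = (\<Sum>a\<in>A ` S. sum f {\<omega>. \<omega> \<in> ?Sb \<and> A \<omega> = a})"
        unfolding pAB_def marg_def by (intro sum.cong refl arg_cong[where f="sum f"]) auto
      also have "\<dots> = sum f ?Sb"
        by (rule sum.group) (use fin in auto)
      also have "\<dots> = pB (g c)" unfolding pB_def marg_def ..
      finally show "pC c / pB (g c) * (\<Sum>a\<in>A ` S. pAB (a, g c)) = pC c / pB (g c) * pB (g c)"
        by simp
    qed
    also have "\<dots> \<le> (\<Sum>c\<in>C ` S. pC c)"
      by (rule sum_mono) (use nnC in auto)
    also have "\<dots> = (\<Sum>\<omega>\<in>S. f \<omega>)"
      unfolding pC_def by (rule marg_total) (use fin in auto)
    finally show ?thesis .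
  qed
  have trm: "f \<omega> * (1 - Q \<omega>) / ln 2 \<le> f \<omega> * log 2 (pAC (A \<omega>, C \<omega>) / pC (C \<omega>))
      - f \<omega> * log 2 (pAB (A \<omega>, g (C \<omega>)) / pB (g (C \<omega>)))" if "\<omega> \<in> S" for \<omega>
  proof (cases "f \<omega> = 0")
    case True then show ?thesis by simp
  next
    case False
    note p = pos[OF that False]
    have f0: "f \<omega> > 0" using nn[OF that] False by simp
    have "Q \<omega> > 0" unfolding Q_def using p by simp
    have "ln (Q \<omega>) \<le> Q \<omega> - 1" by (rule ln_le_minus_one) fact
    have "log 2 (pAC (A \<omega>, C \<omega>) / pC (C \<omega>)) - log 2 (pAB (A \<omega>, g (C \<omega>)) / pB (g (C \<omega>)))
        = - ln (Q \<omega>) / ln 2"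
      unfolding Q_def log_def using p by (simp add: ln_div ln_mult field_simps)
    note eq = this
    have h1: "f \<omega> * (1 - Q \<omega>) \<le> f \<omega> * (- ln (Q \<omega>))"
      using \<open>ln (Q \<omega>) \<le> Q \<omega> - 1\<close> f0 by (intro mult_left_mono) auto
    have "f \<omega> * (1 - Q \<omega>) / ln 2 \<le> f \<omega> * (- ln (Q \<omega>)) / ln 2"
      using h1 by (intro divide_right_mono) auto
    then show ?thesis using eq by (simp add: right_diff_distrib[symmetric])
  qed
  have "(\<Sum>\<omega>\<in>S. f \<omega> * (1 - Q \<omega>) / ln 2) \<le> (\<Sum>\<omega>\<in>S. f \<omega> * log 2 (pAC (A \<omega>, C \<omega>) / pC (C \<omega>))
      - f \<omega> * log 2 (pAB (A \<omega>, g (C \<omega>)) / pB (g (C \<omega>))))"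
    by (rule sum_mono) (rule trm)
  moreover have "(\<Sum>\<omega>\<in>S. f \<omega> * (1 - Q \<omega>) / ln 2) = ((\<Sum>\<omega>\<in>S. f \<omega>) - (\<Sum>\<omega>\<in>S. f \<omega> * Q \<omega>)) / ln 2"
    by (simp add: sum_divide_distrib[symmetric] sum_subtractf right_diff_distrib)
  moreover have "((\<Sum>\<omega>\<in>S. f \<omega>) - (\<Sum>\<omega>\<in>S. f \<omega> * Q \<omega>)) / ln 2 \<ge> 0"
    using Qsum by simp
  ultimately have "0 \<le> (\<Sum>\<omega>\<in>S. f \<omega> * log 2 (pAC (A \<omega>, C \<omega>) / pC (C \<omega>))
      - f \<omega> * log 2 (pAB (A \<omega>, g (C \<omega>)) / pB (g (C \<omega>))))" by linarith
  then show ?thesis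
    unfolding cond_entropy_def eB eAB using B
    by (simp add: sum_subtractf pAC_def pC_def)
qed



definition WO :: "(nat \<Rightarrow> 'y \<Rightarrow> 'z \<Rightarrow> real) \<Rightarrow> ('y \<times> 'z \<Rightarrow> 'c) \<Rightarrow> nat \<Rightarrow> 'c \<Rightarrow> real" where
  "WO W Ob x c = (\<Sum>p\<in>{p. Ob p = c}. W x (fst p) (snd p))"

lemma modm_lt: "0 < m \<Longrightarrow> modm m i j < m"
  unfolding modm_def by (simp add: nat_less_iff)

lemma modm_inj1: "inj_on (modm m i) {..<m}"
proof (rule inj_onI)
  fix j j' assume j: "j \<in> {..<m}" "j' \<in> {..<m}" and e: "modm m i j = modm m i j'"
  have "(int i - int j) mod int m = (int i - int j') mod int m"
    using e j unfolding modm_def by (simp add: nat_eq_iff2)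
  then have "int m dvd (int j' - int j)"
    by (metis mod_eq_dvd_iff diff_diff_eq2 minus_diff_eq dvd_minus_iff diff_diff_cancel
        diff_add_cancel add_diff_cancel_left')
  moreover have "\<bar>int j' - int j\<bar> < int m" using j by auto
  ultimately show "j = j'"
    using dvd_imp_le_int[of "int j' - int j" "int m"] by (cases "int j' - int j = 0") auto
qed

lemma modm_inj2: "inj_on (\<lambda>i. modm m i j) {..<m}"
proof (rule inj_onI)
  fix i i' assume i: "i \<in> {..<m}" "i' \<in> {..<m}" and e: "modm m i j = modm m i' j"
  have "(int i - int j) mod int m = (int i' - int j) mod int m"
    using e i unfolding modm_def by (simp add: nat_eq_iff2)
  then have "int m dvd (int i' - int i)"
    by (metis mod_eq_dvd_iff diff_diff_eq2 minus_diff_eq dvd_minus_iff diff_diff_cancel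
        diff_add_cancel add_diff_cancel_left')
  moreover have "\<bar>int i' - int i\<bar> < int m" using i by auto
  ultimately show "i = i'"
    using dvd_imp_le_int[of "int i' - int i" "int m"] by (cases "int i' - int i = 0") auto
qed

lemma sum_modm1:
  assumes "0 < m" shows "(\<Sum>j<m. h (modm m i j)) = (\<Sum>x<m. h x)"
proof -
  have im: "modm m i ` {..<m} = {..<m}"
    by (rule endo_inj_surj) (use modm_inj1 modm_lt[OF assms] in auto)
  show ?thesis
    using sum.reindex[OF modm_inj1, of h m i] im by simp
qed

lemma sum_modm2:
  assumes "0 < m" shows "(\<Sum>i<m. h (modm m i j)) = (\<Sum>x<m. h x)"
proof -
  have im: "(\<lambda>i. modm m i j) ` {..<m} = {..<m}"
    by (rule endo_inj_surj) (use modm_inj2 modm_lt[OF assms] in auto)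
  show ?thesis
    using sum.reindex[OF modm_inj2, of h m j] im by (simp add: comp_def)
qed

lemma if_mult0: "(if Q then a else 0) * (b::real) = (if Q then a * b else 0)" by simp
lemma sum_if0: "(\<Sum>p\<in>A. if Q then g p else (0::real)) = (if Q then sum g A else 0)" by simp

context
  fixes m :: nat and W :: "nat \<Rightarrow> 'y::finite \<Rightarrow> 'z::finite \<Rightarrow> real"
    and P :: "'u::finite \<Rightarrow> 'v::finite \<Rightarrow> nat \<Rightarrow> real"
begin

abbreviation "SS \<equiv> (UNIV :: 'u set) \<times> (UNIV :: 'v set) \<times> {..<m} \<times> (UNIV :: 'y set) \<times> (UNIV :: 'z set)"
abbreviation "SSs \<equiv> ((UNIV :: 'u set) \<times> {..<m}) \<times> ((UNIV :: 'v set) \<times> {..<m}) \<times> {..<m}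
               \<times> (UNIV :: 'y set) \<times> (UNIV :: 'z set)"
abbreviation "fO \<equiv> bc_joint P W"
abbreviation "fS \<equiv> bc_joint (star_dist m P) W"

lemma G_OU:
  "marg fO SS (\<lambda>w. (Ob (snd (snd (snd w))), fst w)) (c, u) = (\<Sum>v\<in>UNIV. \<Sum>x<m. P u v x * WO W Ob x c)"
proof -
  have "{\<omega>\<in>SS. (Ob (snd (snd (snd \<omega>))), fst \<omega>) = (c, u)} = {u} \<times> UNIV \<times> {..<m} \<times> {p. Ob p = c}"
    by auto
  then show ?thesis unfolding marg_def
    by (simp add: sum.cartesian_product' bc_joint_def WO_def sum_distrib_left split_beta)
qed

lemma G_OV:
  "marg fO SS (\<lambda>w. (Ob (snd (snd (snd w))), fst (snd w))) (c, v) = (\<Sum>u\<in>UNIV. \<Sum>x<m. P u v x * WO W Ob x c)"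
proof -
  have "{\<omega>\<in>SS. (Ob (snd (snd (snd \<omega>))), fst (snd \<omega>)) = (c, v)} = UNIV \<times> {v} \<times> {..<m} \<times> {p. Ob p = c}"
    by auto
  then show ?thesis unfolding marg_def
    by (simp add: sum.cartesian_product' bc_joint_def WO_def sum_distrib_left split_beta)
qed

lemma G_OX:
  assumes "x < m"
  shows "marg fO SS (\<lambda>w. (Ob (snd (snd (snd w))), fst (snd (snd w)))) (c, x)
     = (\<Sum>u\<in>UNIV. \<Sum>v\<in>UNIV. P u v x) * WO W Ob x c"
proof -
  have "{\<omega>\<in>SS. (Ob (snd (snd (snd \<omega>))), fst (snd (snd \<omega>))) = (c, x)} = UNIV \<times> UNIV \<times> {x} \<times> {p. Ob p = c}"
    using assms by auto
  then have "marg fO SS (\<lambda>w. (Ob (snd (snd (snd w))), fst (snd (snd w)))) (c, x)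
     = (\<Sum>u\<in>UNIV. \<Sum>v\<in>UNIV. \<Sum>p\<in>{p. Ob p = c}. P u v x * W x (fst p) (snd p))"
    unfolding marg_def
    by (simp add: sum.cartesian_product' bc_joint_def split_beta)
  also have "\<dots> = (\<Sum>u\<in>UNIV. \<Sum>v\<in>UNIV. P u v x) * WO W Ob x c"
    by (simp only: sum_distrib_right) (simp add: WO_def sum_distrib_left)
  finally show ?thesis .
qed

lemma G_OUVX:
  assumes "x < m"
  shows "marg fO SS (\<lambda>w. (Ob (snd (snd (snd w))), (fst w, fst (snd w), fst (snd (snd w))))) (c, (u, v, x))
     = P u v x * WO W Ob x c"
proof -
  have "{\<omega>\<in>SS. (Ob (snd (snd (snd \<omega>))), (fst \<omega>, fst (snd \<omega>), fst (snd (snd \<omega>)))) = (c, (u, v, x))}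
      = {u} \<times> {v} \<times> {x} \<times> {p. Ob p = c}"
    using assms by auto
  then show ?thesis unfolding marg_def
    by (simp add: sum.cartesian_product' bc_joint_def WO_def sum_distrib_left split_beta)
qed

lemma F_OU:
  assumes "i < m"
  shows "marg fS SSs (\<lambda>w. (Ob (snd (snd (snd w))), fst w)) (c, (u, i))
     = (\<Sum>v\<in>UNIV. \<Sum>x<m. P u v x * WO W Ob x c) / real m"
proof -
  have m: "0 < m" using assms by simp
  have "{\<omega>\<in>SSs. (Ob (snd (snd (snd \<omega>))), fst \<omega>) = (c, (u, i))}
      = {(u, i)} \<times> (UNIV \<times> {..<m}) \<times> {..<m} \<times> {p. Ob p = c}"
    using assms by auto
  then have "marg fS SSs (\<lambda>w. (Ob (snd (snd (snd w))), fst w)) (c, (u, i))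
      = (\<Sum>v\<in>UNIV. \<Sum>j<m. \<Sum>x<m. if x = modm m i j then P u v x / real m * WO W Ob x c else 0)"
    unfolding marg_def
    by (simp add: sum.cartesian_product' bc_joint_def star_dist_def WO_def sum_distrib_left split_beta
        if_mult0 sum_if0 cong: if_cong)
  also have "\<dots> = (\<Sum>v\<in>UNIV. \<Sum>j<m. P u v (modm m i j) / real m * WO W Ob (modm m i j) c)"
    using modm_lt[OF m] by simp
  also have "\<dots> = (\<Sum>v\<in>UNIV. \<Sum>x<m. P u v x / real m * WO W Ob x c)"
    using sum_modm1[OF m, of "\<lambda>x. P _ _ x / real m * WO W Ob x c"] by simp
  finally show ?thesis by (simp add: sum_divide_distrib)
qed

lemma F_OV:
  assumes "j < m"
  shows "marg fS SSs (\<lambda>w. (Ob (snd (snd (snd w))), fst (snd w))) (c, (v, j))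
     = (\<Sum>u\<in>UNIV. \<Sum>x<m. P u v x * WO W Ob x c) / real m"
proof -
  have m: "0 < m" using assms by simp
  have "{\<omega>\<in>SSs. (Ob (snd (snd (snd \<omega>))), fst (snd \<omega>)) = (c, (v, j))}
      = (UNIV \<times> {..<m}) \<times> {(v, j)} \<times> {..<m} \<times> {p. Ob p = c}"
    using assms by auto
  then have "marg fS SSs (\<lambda>w. (Ob (snd (snd (snd w))), fst (snd w))) (c, (v, j))
      = (\<Sum>u\<in>UNIV. \<Sum>i<m. \<Sum>x<m. if x = modm m i j then P u v x / real m * WO W Ob x c else 0)"
    unfolding marg_def
    by (simp add: sum.cartesian_product' bc_joint_def star_dist_def WO_def sum_distrib_left split_beta
        if_mult0 sum_if0 cong: if_cong)
  also have "\<dots> = (\<Sum>u\<in>UNIV. \<Sum>i<m. P u v (modm m i j) / real m * WO W Ob (modm m i j) c)"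
    using modm_lt[OF m] by simp
  also have "\<dots> = (\<Sum>u\<in>UNIV. \<Sum>x<m. P u v x / real m * WO W Ob x c)"
    using sum_modm2[OF m, of "\<lambda>x. P _ _ x / real m * WO W Ob x c"] by simp
  finally show ?thesis by (simp add: sum_divide_distrib)
qed

lemma F_OUV:
  assumes "i < m" "j < m"
  shows "marg fS SSs (\<lambda>w. (Ob (snd (snd (snd w))), (fst w, fst (snd w)))) (c, ((u, i), (v, j)))
     = P u v (modm m i j) * WO W Ob (modm m i j) c / real m"
proof -
  have m: "0 < m" using assms by simp
  have "{\<omega>\<in>SSs. (Ob (snd (snd (snd \<omega>))), (fst \<omega>, fst (snd \<omega>))) = (c, ((u, i), (v, j)))}
      = {(u, i)} \<times> {(v, j)} \<times> {..<m} \<times> {p. Ob p = c}"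
    using assms by auto
  then have "marg fS SSs (\<lambda>w. (Ob (snd (snd (snd w))), (fst w, fst (snd w)))) (c, ((u, i), (v, j)))
      = (\<Sum>x<m. if x = modm m i j then P u v x / real m * WO W Ob x c else 0)"
    unfolding marg_def
    by (simp add: sum.cartesian_product' bc_joint_def star_dist_def WO_def sum_distrib_left split_beta
        if_mult0 sum_if0 cong: if_cong)
  also have "\<dots> = P u v (modm m i j) / real m * WO W Ob (modm m i j) c"
    using modm_lt[OF m] by simp
  finally show ?thesis by simp
qed

lemma F_OX:
  assumes "x < m"
  shows "marg fS SSs (\<lambda>w. (Ob (snd (snd (snd w))), fst (snd (snd w)))) (c, x)
     = (\<Sum>u\<in>UNIV. \<Sum>v\<in>UNIV. P u v x) * WO W Ob x c"
proof -
  have m: "0 < m" using assms by simp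
  have "{\<omega>\<in>SSs. (Ob (snd (snd (snd \<omega>))), fst (snd (snd \<omega>))) = (c, x)}
      = (UNIV \<times> {..<m}) \<times> (UNIV \<times> {..<m}) \<times> {x} \<times> {p. Ob p = c}"
    using assms by auto
  then have "marg fS SSs (\<lambda>w. (Ob (snd (snd (snd w))), fst (snd (snd w)))) (c, x)
      = (\<Sum>u\<in>UNIV. \<Sum>i<m. \<Sum>v\<in>UNIV. \<Sum>j<m. if modm m i j = x then P u v x * WO W Ob x c / real m else 0)"
    unfolding marg_def
    by (simp add: sum.cartesian_product' bc_joint_def star_dist_def WO_def sum_distrib_left split_beta
        if_mult0 sum_if0 sum_divide_distrib cong: if_cong)
  also have "\<dots> = (\<Sum>u\<in>UNIV. \<Sum>i<m. \<Sum>v\<in>UNIV. P u v x * WO W Ob x c / real m)"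
  proof -
    have inner: "(\<Sum>j<m. if modm m i j = x then P u v x * WO W Ob x c / real m else 0)
       = P u v x * WO W Ob x c / real m" for u v i
      using sum_modm1[OF m, of "\<lambda>y. if y = x then P u v x * WO W Ob x c / real m else 0" i] assms
      by simp
    show ?thesis by (simp only: inner)
  qed
  also have "\<dots> = (\<Sum>u\<in>UNIV. \<Sum>v\<in>UNIV. P u v x) * WO W Ob x c"
    using m by (simp add: sum_distrib_right sum_divide_distrib[symmetric])
  finally show ?thesis .
qed

lemma F_U:
  assumes "i < m"
  shows "marg fS SSs fst (u, i) = (\<Sum>v\<in>UNIV. \<Sum>x<m. P u v x * WO W (\<lambda>_. ()) x ()) / real m"
proof -
  have "marg fS SSs fst (u, i) = marg fS SSs (\<lambda>w. ((\<lambda>_. ()) (snd (snd (snd w))), fst w)) ((), (u, i))"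
    by (simp add: marg_def)
  also have "\<dots> = (\<Sum>v\<in>UNIV. \<Sum>x<m. P u v x * WO W (\<lambda>_. ()) x ()) / real m"
    by (rule F_OU[OF assms])
  finally show ?thesis .
qed

lemma F_V:
  assumes "j < m"
  shows "marg fS SSs (\<lambda>w. fst (snd w)) (v, j) = (\<Sum>u\<in>UNIV. \<Sum>x<m. P u v x * WO W (\<lambda>_. ()) x ()) / real m"
proof -
  have "marg fS SSs (\<lambda>w. fst (snd w)) (v, j) = marg fS SSs (\<lambda>w. ((\<lambda>_. ()) (snd (snd (snd w))), fst (snd w))) ((), (v, j))"
    by (simp add: marg_def)
  also have "\<dots> = (\<Sum>u\<in>UNIV. \<Sum>x<m. P u v x * WO W (\<lambda>_. ()) x ()) / real m"
    by (rule F_OV[OF assms])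
  finally show ?thesis .
qed

lemma F_UV:
  assumes "i < m" "j < m"
  shows "marg fS SSs (\<lambda>w. (fst w, fst (snd w))) ((u, i), (v, j))
     = P u v (modm m i j) * WO W (\<lambda>_. ()) (modm m i j) () / real m"
proof -
  have "marg fS SSs (\<lambda>w. (fst w, fst (snd w))) ((u, i), (v, j)) =
     marg fS SSs (\<lambda>w. ((\<lambda>_. ()) (snd (snd (snd w))), (fst w, fst (snd w)))) ((), ((u, i), (v, j)))"
    by (simp add: marg_def)
  also have "\<dots> = P u v (modm m i j) * WO W (\<lambda>_. ()) (modm m i j) () / real m"
    by (rule F_OUV[OF assms])
  finally show ?thesis .
qed

lemma F_X:
  assumes "x < m"
  shows "marg fS SSs (\<lambda>w. fst (snd (snd w))) x = (\<Sum>u\<in>UNIV. \<Sum>v\<in>UNIV. P u v x) * WO W (\<lambda>_. ()) x ()"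
proof -
  have "marg fS SSs (\<lambda>w. fst (snd (snd w))) x =
     marg fS SSs (\<lambda>w. ((\<lambda>_. ()) (snd (snd (snd w))), fst (snd (snd w)))) ((), x)"
    by (simp add: marg_def)
  also have "\<dots> = (\<Sum>u\<in>UNIV. \<Sum>v\<in>UNIV. P u v x) * WO W (\<lambda>_. ()) x ()"
    by (rule F_OX[OF assms])
  finally show ?thesis .
qed

lemma G_U:
  shows "marg fO SS fst u = (\<Sum>v\<in>UNIV. \<Sum>x<m. P u v x * WO W (\<lambda>_. ()) x ())"
proof -
  have "marg fO SS fst u = marg fO SS (\<lambda>w. ((\<lambda>_. ()) (snd (snd (snd w))), fst w)) ((), u)"
    by (simp add: marg_def)
  also have "\<dots> = (\<Sum>v\<in>UNIV. \<Sum>x<m. P u v x * WO W (\<lambda>_. ()) x ())"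
    by (rule G_OU)
  finally show ?thesis .
qed

lemma G_V:
  shows "marg fO SS (\<lambda>w. fst (snd w)) v = (\<Sum>u\<in>UNIV. \<Sum>x<m. P u v x * WO W (\<lambda>_. ()) x ())"
proof -
  have "marg fO SS (\<lambda>w. fst (snd w)) v = marg fO SS (\<lambda>w. ((\<lambda>_. ()) (snd (snd (snd w))), fst (snd w))) ((), v)"
    by (simp add: marg_def)
  also have "\<dots> = (\<Sum>u\<in>UNIV. \<Sum>x<m. P u v x * WO W (\<lambda>_. ()) x ())"
    by (rule G_OV)
  finally show ?thesis .
qed

lemma G_X:
  assumes "x < m"
  shows "marg fO SS (\<lambda>w. fst (snd (snd w))) x = (\<Sum>u\<in>UNIV. \<Sum>v\<in>UNIV. P u v x) * WO W (\<lambda>_. ()) x ()"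
proof -
  have "marg fO SS (\<lambda>w. fst (snd (snd w))) x =
     marg fO SS (\<lambda>w. ((\<lambda>_. ()) (snd (snd (snd w))), fst (snd (snd w)))) ((), x)"
    by (simp add: marg_def)
  also have "\<dots> = (\<Sum>u\<in>UNIV. \<Sum>v\<in>UNIV. P u v x) * WO W (\<lambda>_. ()) x ()"
    by (rule G_OX[OF assms])
  finally show ?thesis .
qed

lemma G_UVX:
  assumes "x < m"
  shows "marg fO SS (\<lambda>w. (fst w, fst (snd w), fst (snd (snd w)))) (u, v, x) = P u v x * WO W (\<lambda>_. ()) x ()"
proof -
  have "marg fO SS (\<lambda>w. (fst w, fst (snd w), fst (snd (snd w)))) (u, v, x) =
     marg fO SS (\<lambda>w. ((\<lambda>_. ()) (snd (snd (snd w))), (fst w, fst (snd w), fst (snd (snd w))))) ((), (u, v, x))"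
    by (simp add: marg_def)
  also have "\<dots> = P u v x * WO W (\<lambda>_. ()) x ()"
    by (rule G_OUVX[OF assms])
  finally show ?thesis .
qed

lemma scale_m:
  assumes "0 < m"
  shows "(\<Sum>i<m. a / real m * log 2 ((a / real m) / (b / real m))) = a * log 2 (a / b)"
  using assms by simp

lemma Part_U:
  fixes Ob :: "'y \<times> 'z \<Rightarrow> 'c::finite"
  assumes m: "0 < m"
  shows "cond_entropy fS SSs (\<lambda>w. Ob (snd (snd (snd w)))) fst = cond_entropy fO SS (\<lambda>w. Ob (snd (snd (snd w)))) fst"
proof -
  define GOU where "GOU c u = (\<Sum>v\<in>UNIV. \<Sum>x<m. P u v x * WO W Ob x c)" for c u
  define GU where "GU u = (\<Sum>v\<in>UNIV. \<Sum>x<m. P u v x * WO W (\<lambda>_. ()) x ())" for u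
  have "cond_entropy fS SSs (\<lambda>w. Ob (snd (snd (snd w)))) fst =
    - (\<Sum>p\<in>UNIV \<times> (UNIV \<times> {..<m}). marg fS SSs (\<lambda>w. (Ob (snd (snd (snd w))), fst w)) p
            * log 2 (marg fS SSs (\<lambda>w. (Ob (snd (snd (snd w))), fst w)) p / marg fS SSs fst (snd p)))"
    by (rule ce_T) auto
  also have "\<dots> = - (\<Sum>c\<in>UNIV. \<Sum>u\<in>UNIV. \<Sum>i<m. GOU c u / real m * log 2 ((GOU c u / real m) / (GU u / real m)))"
    by (simp add: sum.cartesian_product' F_OU F_U GOU_def GU_def del: UNIV_Times_UNIV)
  also have "\<dots> = - (\<Sum>c\<in>UNIV. \<Sum>u\<in>UNIV. GOU c u * log 2 (GOU c u / GU u))"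
    by (simp only: scale_m[OF m])
  also have "\<dots> = - (\<Sum>p\<in>UNIV \<times> UNIV. marg fO SS (\<lambda>w. (Ob (snd (snd (snd w))), fst w)) p
            * log 2 (marg fO SS (\<lambda>w. (Ob (snd (snd (snd w))), fst w)) p / marg fO SS fst (snd p)))"
    by (simp add: sum.cartesian_product' G_OU G_U GOU_def GU_def del: UNIV_Times_UNIV)
  also have "\<dots> = cond_entropy fO SS (\<lambda>w. Ob (snd (snd (snd w)))) fst"
    by (rule ce_T[symmetric]) auto
  finally show ?thesis .
qed

lemma Part_V:
  fixes Ob :: "'y \<times> 'z \<Rightarrow> 'c::finite"
  assumes m: "0 < m"
  shows "cond_entropy fS SSs (\<lambda>w. Ob (snd (snd (snd w)))) (\<lambda>w. fst (snd w))
       = cond_entropy fO SS (\<lambda>w. Ob (snd (snd (snd w)))) (\<lambda>w. fst (snd w))"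
proof -
  define GOV where "GOV c v = (\<Sum>u\<in>UNIV. \<Sum>x<m. P u v x * WO W Ob x c)" for c v
  define GV where "GV v = (\<Sum>u\<in>UNIV. \<Sum>x<m. P u v x * WO W (\<lambda>_. ()) x ())" for v
  have "cond_entropy fS SSs (\<lambda>w. Ob (snd (snd (snd w)))) (\<lambda>w. fst (snd w)) =
    - (\<Sum>p\<in>UNIV \<times> (UNIV \<times> {..<m}). marg fS SSs (\<lambda>w. (Ob (snd (snd (snd w))), fst (snd w))) p
            * log 2 (marg fS SSs (\<lambda>w. (Ob (snd (snd (snd w))), fst (snd w))) p / marg fS SSs (\<lambda>w. fst (snd w)) (snd p)))"
    by (rule ce_T) auto
  also have "\<dots> = - (\<Sum>c\<in>UNIV. \<Sum>v\<in>UNIV. \<Sum>j<m. GOV c v / real m * log 2 ((GOV c v / real m) / (GV v / real m)))"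
    by (simp add: sum.cartesian_product' F_OV F_V GOV_def GV_def del: UNIV_Times_UNIV)
  also have "\<dots> = - (\<Sum>c\<in>UNIV. \<Sum>v\<in>UNIV. GOV c v * log 2 (GOV c v / GV v))"
    by (simp only: scale_m[OF m])
  also have "\<dots> = - (\<Sum>p\<in>UNIV \<times> UNIV. marg fO SS (\<lambda>w. (Ob (snd (snd (snd w))), fst (snd w))) p
            * log 2 (marg fO SS (\<lambda>w. (Ob (snd (snd (snd w))), fst (snd w))) p / marg fO SS (\<lambda>w. fst (snd w)) (snd p)))"
    by (simp add: sum.cartesian_product' G_OV G_V GOV_def GV_def del: UNIV_Times_UNIV)
  also have "\<dots> = cond_entropy fO SS (\<lambda>w. Ob (snd (snd (snd w)))) (\<lambda>w. fst (snd w))"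
    by (rule ce_T[symmetric]) auto
  finally show ?thesis .
qed

lemma Part_X:
  fixes Ob :: "'y \<times> 'z \<Rightarrow> 'c::finite"
  shows "cond_entropy fS SSs (\<lambda>w. Ob (snd (snd (snd w)))) (\<lambda>w. fst (snd (snd w)))
       = cond_entropy fO SS (\<lambda>w. Ob (snd (snd (snd w)))) (\<lambda>w. fst (snd (snd w)))"
proof -
  have "cond_entropy fS SSs (\<lambda>w. Ob (snd (snd (snd w)))) (\<lambda>w. fst (snd (snd w))) =
    - (\<Sum>p\<in>UNIV \<times> {..<m}. marg fS SSs (\<lambda>w. (Ob (snd (snd (snd w))), fst (snd (snd w)))) p
            * log 2 (marg fS SSs (\<lambda>w. (Ob (snd (snd (snd w))), fst (snd (snd w)))) p / marg fS SSs (\<lambda>w. fst (snd (snd w))) (snd p)))"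
    by (rule ce_T) auto
  also have "\<dots> = - (\<Sum>p\<in>UNIV \<times> {..<m}. marg fO SS (\<lambda>w. (Ob (snd (snd (snd w))), fst (snd (snd w)))) p
            * log 2 (marg fO SS (\<lambda>w. (Ob (snd (snd (snd w))), fst (snd (snd w)))) p / marg fO SS (\<lambda>w. fst (snd (snd w))) (snd p)))"
    by (intro arg_cong[where f=uminus] sum.cong refl) (auto simp: F_OX G_OX F_X G_X simp del: UNIV_Times_UNIV)
  also have "\<dots> = cond_entropy fO SS (\<lambda>w. Ob (snd (snd (snd w)))) (\<lambda>w. fst (snd (snd w)))"
    by (rule ce_T[symmetric]) auto
  finally show ?thesis .
qed

lemma pX_pos:
  assumes "\<And>u v x. P u v x \<ge> 0" "P u v x \<noteq> 0"
  shows "(\<Sum>u\<in>UNIV. \<Sum>v\<in>UNIV. P u v x) > 0"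
proof -
  have "P u v x \<le> (\<Sum>v\<in>UNIV. P u v x)" by (rule member_le_sum) (use assms in auto)
  also have "\<dots> \<le> (\<Sum>u\<in>UNIV. \<Sum>v\<in>UNIV. P u v x)"
    by (rule member_le_sum[where f="\<lambda>u. \<Sum>v\<in>UNIV. P u v x"]) (use assms in \<open>auto intro: sum_nonneg\<close>)
  finally show ?thesis using assms by (metis less_eq_real_def dual_order.strict_trans2)
qed

lemma Part_UV:
  fixes Ob :: "'y \<times> 'z \<Rightarrow> 'c::finite"
  assumes Pnn: "\<And>u v x. P u v x \<ge> 0"
  shows "cond_entropy fS SSs (\<lambda>w. Ob (snd (snd (snd w)))) (\<lambda>w. (fst w, fst (snd w)))
       = cond_entropy fS SSs (\<lambda>w. Ob (snd (snd (snd w)))) (\<lambda>w. fst (snd (snd w)))"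
proof (rule ce_cong)
  fix \<omega> assume om: "\<omega> \<in> SSs" and nz: "fS \<omega> \<noteq> 0"
  obtain u i v j x y z where w: "\<omega> = ((u, i), (v, j), x, y, z)" by (metis prod.exhaust)
  have lt: "i < m" "j < m" "x < m" using om w by auto
  have x: "x = modm m i j" and Pz: "P u v x \<noteq> 0"
    using nz unfolding w bc_joint_def star_dist_def by (auto split: if_splits)
  have pX: "(\<Sum>u\<in>UNIV. \<Sum>v\<in>UNIV. P u v x) > 0" by (rule pX_pos[OF Pnn Pz])
  have m0: "real m \<noteq> 0" using lt by simp
  show "marg fS SSs (\<lambda>w. (Ob (snd (snd (snd w))), fst w, fst (snd w))) (Ob (snd (snd (snd \<omega>))), fst \<omega>, fst (snd \<omega>)) /
        marg fS SSs (\<lambda>w. (fst w, fst (snd w))) (fst \<omega>, fst (snd \<omega>)) =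
        marg fS SSs (\<lambda>w. (Ob (snd (snd (snd w))), fst (snd (snd w)))) (Ob (snd (snd (snd \<omega>))), fst (snd (snd \<omega>))) /
        marg fS SSs (\<lambda>w. fst (snd (snd w))) (fst (snd (snd \<omega>)))"
    unfolding w using lt m0 Pz pX
    by (simp add: F_OUV F_UV F_OX F_X x[symmetric] del: UNIV_Times_UNIV)
qed

lemma Part_Markov:
  fixes Ob :: "'y \<times> 'z \<Rightarrow> 'c::finite"
  assumes Pnn: "\<And>u v x. P u v x \<ge> 0"
  shows "cond_entropy fO SS (\<lambda>w. Ob (snd (snd (snd w)))) (\<lambda>w. fst (snd (snd w)))
       = cond_entropy fO SS (\<lambda>w. Ob (snd (snd (snd w)))) (\<lambda>w. (fst w, fst (snd w), fst (snd (snd w))))"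
proof (rule ce_cong)
  fix \<omega> assume om: "\<omega> \<in> SS" and nz: "fO \<omega> \<noteq> 0"
  obtain u v x y z where w: "\<omega> = (u, v, x, y, z)" by (metis prod.exhaust)
  have lt: "x < m" using om w by auto
  have Pz: "P u v x \<noteq> 0"
    using nz unfolding w bc_joint_def by auto
  have pX: "(\<Sum>u\<in>UNIV. \<Sum>v\<in>UNIV. P u v x) > 0" by (rule pX_pos[OF Pnn Pz])
  show "marg fO SS (\<lambda>w. (Ob (snd (snd (snd w))), fst (snd (snd w)))) (Ob (snd (snd (snd \<omega>))), fst (snd (snd \<omega>))) /
        marg fO SS (\<lambda>w. fst (snd (snd w))) (fst (snd (snd \<omega>))) =
        marg fO SS (\<lambda>w. (Ob (snd (snd (snd w))), fst w, fst (snd w), fst (snd (snd w))))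
          (Ob (snd (snd (snd \<omega>))), fst \<omega>, fst (snd \<omega>), fst (snd (snd \<omega>))) /
        marg fO SS (\<lambda>w. (fst w, fst (snd w), fst (snd (snd w)))) (fst \<omega>, fst (snd \<omega>), fst (snd (snd \<omega>)))"
    unfolding w using lt Pz pX
    by (simp add: G_OUVX G_UVX G_OX G_X del: UNIV_Times_UNIV)
qed

lemma Part_le:
  fixes Ob :: "'y \<times> 'z \<Rightarrow> 'c::finite"
  assumes Pnn: "\<And>u v x. P u v x \<ge> 0" and Wnn: "\<And>x y z. x < m \<Longrightarrow> W x y z \<ge> 0"
  shows "cond_entropy fO SS (\<lambda>w. Ob (snd (snd (snd w)))) (\<lambda>w. (fst w, fst (snd w), fst (snd (snd w))))
      \<le> cond_entropy fO SS (\<lambda>w. Ob (snd (snd (snd w)))) (\<lambda>w. (fst w, fst (snd w)))"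
  by (rule ce_le[where g="\<lambda>t. (fst t, fst (snd t))"])
     (auto simp: bc_joint_def intro!: mult_nonneg_nonneg Pnn Wnn)

end

theorem corollary3p4:
  fixes m :: nat
    and W :: "nat \<Rightarrow> 'y::finite \<Rightarrow> 'z::finite \<Rightarrow> real"
    and P :: "'u::finite \<Rightarrow> 'v::finite \<Rightarrow> nat \<Rightarrow> real"
  assumes W_nonneg: "\<And>x y z. x < m \<Longrightarrow> W x y z \<ge> 0"
    and W_sum: "\<And>x. x < m \<Longrightarrow> (\<Sum>y\<in>UNIV. \<Sum>z\<in>UNIV. W x y z) = 1"
    and P_nonneg: "\<And>u v x. P u v x \<ge> 0"
    and P_sum: "(\<Sum>u\<in>UNIV. \<Sum>v\<in>UNIV. \<Sum>x\<in>{..<m}. P u v x) = 1"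
  defines "S \<equiv> (UNIV :: 'u set) \<times> (UNIV :: 'v set) \<times> {..<m} \<times> (UNIV :: 'y set) \<times> (UNIV :: 'z set)"
    and "f \<equiv> bc_joint P W"
    and "Ss \<equiv> ((UNIV :: 'u set) \<times> {..<m}) \<times> ((UNIV :: 'v set) \<times> {..<m}) \<times> {..<m}
               \<times> (UNIV :: 'y set) \<times> (UNIV :: 'z set)"
    and "fs \<equiv> bc_joint (star_dist m P) W"
  shows
    "(\<forall>i<m. marg fs Ss (\<lambda>w. fst (snd (snd w))) i = marg f S (\<lambda>w. fst (snd (snd w))) i)
   \<and> cond_entropy fs Ss (\<lambda>w. fst (snd (snd (snd w)))) fst
       = cond_entropy f S (\<lambda>w. fst (snd (snd (snd w)))) fst
   \<and> cond_entropy fs Ss (\<lambda>w. snd (snd (snd (snd w)))) fst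
       = cond_entropy f S (\<lambda>w. snd (snd (snd (snd w)))) fst
   \<and> cond_entropy fs Ss (\<lambda>w. fst (snd (snd (snd w)))) (\<lambda>w. fst (snd w))
       = cond_entropy f S (\<lambda>w. fst (snd (snd (snd w)))) (\<lambda>w. fst (snd w))
   \<and> cond_entropy fs Ss (\<lambda>w. snd (snd (snd (snd w)))) (\<lambda>w. fst (snd w))
       = cond_entropy f S (\<lambda>w. snd (snd (snd (snd w)))) (\<lambda>w. fst (snd w))
   \<and> cond_entropy fs Ss (\<lambda>w. fst (snd (snd (snd w)))) (\<lambda>w. (fst w, fst (snd w)))
       = cond_entropy fs Ss (\<lambda>w. fst (snd (snd (snd w)))) (\<lambda>w. fst (snd (snd w)))
   \<and> cond_entropy fs Ss (\<lambda>w. fst (snd (snd (snd w)))) (\<lambda>w. fst (snd (snd w)))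
       = cond_entropy f S (\<lambda>w. fst (snd (snd (snd w)))) (\<lambda>w. fst (snd (snd w)))
   \<and> cond_entropy f S (\<lambda>w. fst (snd (snd (snd w)))) (\<lambda>w. fst (snd (snd w)))
       \<le> cond_entropy f S (\<lambda>w. fst (snd (snd (snd w)))) (\<lambda>w. (fst w, fst (snd w)))
   \<and> cond_entropy fs Ss (\<lambda>w. snd (snd (snd (snd w)))) (\<lambda>w. (fst w, fst (snd w)))
       = cond_entropy fs Ss (\<lambda>w. snd (snd (snd (snd w)))) (\<lambda>w. fst (snd (snd w)))
   \<and> cond_entropy fs Ss (\<lambda>w. snd (snd (snd (snd w)))) (\<lambda>w. fst (snd (snd w)))
       = cond_entropy f S (\<lambda>w. snd (snd (snd (snd w)))) (\<lambda>w. fst (snd (snd w)))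
   \<and> cond_entropy f S (\<lambda>w. snd (snd (snd (snd w)))) (\<lambda>w. fst (snd (snd w)))
       \<le> cond_entropy f S (\<lambda>w. snd (snd (snd (snd w)))) (\<lambda>w. (fst w, fst (snd w)))"
proof -
  have m: "0 < m"
  proof (rule ccontr)
    assume "\<not> 0 < m"
    then have "m = 0" by simp
    then show False using P_sum by simp
  qed
  have i: "\<forall>i<m. marg fs Ss (\<lambda>w. fst (snd (snd w))) i = marg f S (\<lambda>w. fst (snd (snd w))) i"
    unfolding S_def f_def Ss_def fs_def by (auto simp: F_X G_X simp del: UNIV_Times_UNIV)
  have U1: "cond_entropy fs Ss (\<lambda>w. fst (snd (snd (snd w)))) fst = cond_entropy f S (\<lambda>w. fst (snd (snd (snd w)))) fst"
    unfolding S_def f_def Ss_def fs_def by (rule Part_U[OF m])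
  have U2: "cond_entropy fs Ss (\<lambda>w. snd (snd (snd (snd w)))) fst = cond_entropy f S (\<lambda>w. snd (snd (snd (snd w)))) fst"
    unfolding S_def f_def Ss_def fs_def by (rule Part_U[OF m])
  have V1: "cond_entropy fs Ss (\<lambda>w. fst (snd (snd (snd w)))) (\<lambda>w. fst (snd w))
       = cond_entropy f S (\<lambda>w. fst (snd (snd (snd w)))) (\<lambda>w. fst (snd w))"
    unfolding S_def f_def Ss_def fs_def by (rule Part_V[OF m])
  have V2: "cond_entropy fs Ss (\<lambda>w. snd (snd (snd (snd w)))) (\<lambda>w. fst (snd w))
       = cond_entropy f S (\<lambda>w. snd (snd (snd (snd w)))) (\<lambda>w. fst (snd w))"
    unfolding S_def f_def Ss_def fs_def by (rule Part_V[OF m])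
  have UV1: "cond_entropy fs Ss (\<lambda>w. fst (snd (snd (snd w)))) (\<lambda>w. (fst w, fst (snd w)))
       = cond_entropy fs Ss (\<lambda>w. fst (snd (snd (snd w)))) (\<lambda>w. fst (snd (snd w)))"
    unfolding S_def f_def Ss_def fs_def by (rule Part_UV[OF P_nonneg])
  have UV2: "cond_entropy fs Ss (\<lambda>w. snd (snd (snd (snd w)))) (\<lambda>w. (fst w, fst (snd w)))
       = cond_entropy fs Ss (\<lambda>w. snd (snd (snd (snd w)))) (\<lambda>w. fst (snd (snd w)))"
    unfolding S_def f_def Ss_def fs_def by (rule Part_UV[OF P_nonneg])
  have X1: "cond_entropy fs Ss (\<lambda>w. fst (snd (snd (snd w)))) (\<lambda>w. fst (snd (snd w)))
       = cond_entropy f S (\<lambda>w. fst (snd (snd (snd w)))) (\<lambda>w. fst (snd (snd w)))"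
    unfolding S_def f_def Ss_def fs_def by (rule Part_X)
  have X2: "cond_entropy fs Ss (\<lambda>w. snd (snd (snd (snd w)))) (\<lambda>w. fst (snd (snd w)))
       = cond_entropy f S (\<lambda>w. snd (snd (snd (snd w)))) (\<lambda>w. fst (snd (snd w)))"
    unfolding S_def f_def Ss_def fs_def by (rule Part_X)
  have L1: "cond_entropy f S (\<lambda>w. fst (snd (snd (snd w)))) (\<lambda>w. fst (snd (snd w)))
       \<le> cond_entropy f S (\<lambda>w. fst (snd (snd (snd w)))) (\<lambda>w. (fst w, fst (snd w)))"
    unfolding S_def f_def
    by (subst Part_Markov[OF P_nonneg]) (rule Part_le[OF P_nonneg W_nonneg])
  have L2: "cond_entropy f S (\<lambda>w. snd (snd (snd (snd w)))) (\<lambda>w. fst (snd (snd w)))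
       \<le> cond_entropy f S (\<lambda>w. snd (snd (snd (snd w)))) (\<lambda>w. (fst w, fst (snd w)))"
    unfolding S_def f_def
    by (subst Part_Markov[OF P_nonneg]) (rule Part_le[OF P_nonneg W_nonneg])
  show ?thesis by (intro conjI i U1 U2 V1 V2 UV1 X1 L1 UV2 X2 L2)
qed

end
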